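(* Let $F,G$ be non-constant functions analytic in some complex neighborhood of $0$, and suppose that neither the curve of $F$ nor the curve of $G$ bounces back at zero. Then the following are equivalent: (i) $F,G$ roughly agree near zero; (ii) $F,G$ share a curve around zero.
   Context: $\Sigma_0$ denotes the collection of open intervals in $\mathbb R$ containing $0$; for $\mathcal I\in\Sigma_0$ put $\mathcal I^+:=\mathcal I\cap[0,\infty)$, $\mathcal I^-:=\mathcal I\cap(-\infty,0]$. "There are arbitrarily short intervals with property P" means: for every $\varepsilon>0$ there are such intervals of length less than $\varepsilon$. The curve of $F$ bounces back at zero if there are arbitrarily short $\mathcal I\in\Sigma_0$ with $F(\mathcal I^+)=F(\mathcal I^-)$. $F,G$ share a curve around zero if there are arbitrarily short $\mathcal I,\mathcal J\in\Sigma_0$ with $F(\mathcal I)=G(\mathcal J)$. $F,G$ roughly agree near zero if there are sequences $(u_k)_{k\ge1},(v_k)_{k\ge1}$ of nonzero real numbers with $u_k\to0$, $v_k\to0$ and $F(u_k)=G(v_k)$ for all $k\ge1$. *)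

theory Defs
  imports "HOL-Analysis.Analysis"
begin

definition curve_img :: "(complex \<Rightarrow> complex) \<Rightarrow> real set \<Rightarrow> complex set" where
  "curve_img F I = F ` (complex_of_real ` I)"

text \<open>Sigma_0: open intervals of the real line containing 0. Only bounded ones can be
  arbitrarily short, so we parametrise them as a<..<b with a < 0 < b; length is b - a.\<close>

definition bounces_back :: "(complex \<Rightarrow> complex) \<Rightarrow> bool" where
  "bounces_back F \<longleftrightarrow> (\<forall>\<epsilon>>0. \<exists>a b::real. a < 0 \<and> 0 < b \<and> b - a < \<epsilon> \<and>
      curve_img F ({a<..<b} \<inter> {0..}) = curve_img F ({a<..<b} \<inter> {..0}))"

definition share_curve :: "(complex \<Rightarrow> complex) \<Rightarrow> (complex \<Rightarrow> complex) \<Rightarrow> bool" where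
  "share_curve F G \<longleftrightarrow> (\<forall>\<epsilon>>0. \<exists>a b c d::real. a < 0 \<and> 0 < b \<and> b - a < \<epsilon> \<and>
      c < 0 \<and> 0 < d \<and> d - c < \<epsilon> \<and> curve_img F {a<..<b} = curve_img G {c<..<d})"

definition roughly_agree :: "(complex \<Rightarrow> complex) \<Rightarrow> (complex \<Rightarrow> complex) \<Rightarrow> bool" where
  "roughly_agree F G \<longleftrightarrow> (\<exists>u v :: nat \<Rightarrow> real. (\<forall>k\<ge>1. u k \<noteq> 0 \<and> v k \<noteq> 0) \<and>
      u \<longlonglongrightarrow> 0 \<and> v \<longlonglongrightarrow> 0 \<and>
      (\<forall>k\<ge>1. F (complex_of_real (u k)) = G (complex_of_real (v k))))"

definition analytic_nonconst_near0 :: "(complex \<Rightarrow> complex) \<Rightarrow> bool" where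
  "analytic_nonconst_near0 F \<longleftrightarrow> (\<exists>r>0. F analytic_on ball 0 r \<and>
      \<not> (\<exists>c. \<forall>z\<in>ball 0 r. F z = c))"

end

theory Submission
  imports Defs "HOL-Complex_Analysis.Complex_Analysis"
begin

lemma hol_root:
  assumes "f holomorphic_on ball c r" "\<And>z. z \<in> ball c r \<Longrightarrow> f z \<noteq> 0" "m > 0" "r > 0"
  obtains R where "R holomorphic_on ball c r" "\<And>z. z \<in> ball c r \<Longrightarrow> R z \<noteq> 0 \<and> R z ^ m = f z"
proof -
  obtain l where l: "l holomorphic_on ball c r" "\<And>x. x \<in> ball c r \<Longrightarrow> exp (l x) = f x"
    using holomorphic_logarithm_exists[of "ball c r" f c] assms by auto
  define R where "R z = exp (l z / of_nat m)" for z
  have "R holomorphic_on ball c r" unfolding R_def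
    by (intro holomorphic_intros l holomorphic_on_compose_gen[where g=exp, unfolded o_def]) auto
  moreover have "R z \<noteq> 0 \<and> R z ^ m = f z" if "z \<in> ball c r" for z
  proof -
    have "R z ^ m = exp (of_nat m * (l z / of_nat m))" unfolding R_def by (rule exp_of_nat_mult[symmetric])
    also have "\<dots> = f z" using assms(3) l(2)[OF that] by simp
    finally show ?thesis unfolding R_def by simp
  qed
  ultimately show ?thesis using that by blast
qed


lemma factor0:
  fixes F :: "complex \<Rightarrow> complex"
  assumes "analytic_nonconst_near0 F"
  obtains r a p where "r > 0" "a > 0" "p holomorphic_on ball 0 r" "F holomorphic_on ball 0 r"
    "\<And>z. z \<in> ball 0 r \<Longrightarrow> p z \<noteq> 0 \<and> F z - F 0 = (z * p z) ^ a"
proof -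
  obtain r0 where r0: "r0 > 0" "F analytic_on ball 0 r0" "\<not> (\<exists>c. \<forall>z\<in>ball 0 r0. F z = c)"
    using assms unfolding analytic_nonconst_near0_def by blast
  have holF: "F holomorphic_on ball 0 r0" using r0(2) analytic_imp_holomorphic by blast
  have hf: "(\<lambda>z. F z - F 0) holomorphic_on ball 0 r0" by (intro holomorphic_intros holF)
  have nc: "\<not> (\<lambda>z. F z - F 0) constant_on ball 0 r0"
  proof
    assume "(\<lambda>z. F z - F 0) constant_on ball 0 r0"
    then obtain c where "\<forall>z\<in>ball 0 r0. F z - F 0 = c" unfolding constant_on_def by blast
    then have "\<forall>z\<in>ball 0 r0. F z = c + F 0" by (metis diff_eq_eq)
    with r0(3) show False by blast
  qed
  have "\<exists>n r g. 0 < n \<and> 0 < r \<and> ball (0::complex) r \<subseteq> ball 0 r0 \<and> g holomorphic_on ball 0 r \<and>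
      (\<forall>w\<in>ball 0 r. F w - F 0 = w^n * g w \<and> g w \<noteq> 0)"
    apply (rule holomorphic_factor_zero_nonconstant[OF hf open_ball connected_ball _ _ nc, of 0])
    using r0(1) apply simp
     apply simp
    subgoal for g r n by (intro exI[of _ n] exI[of _ r] exI[of _ g] conjI ballI; (assumption | simp))
    done
  then obtain n r g where gr: "0 < n" "0 < r" "ball (0::complex) r \<subseteq> ball 0 r0" "g holomorphic_on ball 0 r"
      "\<And>w. w \<in> ball 0 r \<Longrightarrow> F w - F 0 = w^n * g w" "\<And>w. w \<in> ball 0 r \<Longrightarrow> g w \<noteq> 0"
    by blast
  obtain R where R: "R holomorphic_on ball 0 r" "\<And>z. z \<in> ball 0 r \<Longrightarrow> R z \<noteq> 0 \<and> R z ^ n = g z"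
    using hol_root[OF gr(4) gr(6) gr(1) gr(2)] by blast
  have holFr: "F holomorphic_on ball 0 r" using holF gr(3) holomorphic_on_subset by blast
  have hz: "R z \<noteq> 0 \<and> F z - F 0 = (z * R z) ^ n" if z: "z \<in> ball 0 r" for z :: complex
    using R(2)[OF z] gr(5)[OF z] by (simp add: power_mult_distrib)
  show ?thesis by (rule that[OF gr(2) gr(1) R(1) holFr hz])
qed

lemma alpha:
  fixes \<sigma> :: real and F p :: "complex \<Rightarrow> complex"
  assumes "r > 0" "p holomorphic_on ball 0 r"
    "\<And>z. z \<in> ball 0 r \<Longrightarrow> p z \<noteq> 0 \<and> F z - F 0 = (z * p z) ^ a"
    "m > 0" "\<sigma> = 1 \<or> \<sigma> = -1"
  obtains \<rho> R where "\<rho> > 0" "\<rho> \<le> r" "R holomorphic_on ball 0 \<rho>"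
    "\<And>s. s \<in> ball 0 \<rho> \<Longrightarrow> R s \<noteq> 0 \<and> F (of_real \<sigma> * s ^ m) - F 0 = (s * R s) ^ (m * a)"
proof -
  define \<rho> where "\<rho> = min 1 r"
  have \<rho>: "\<rho> > 0" "\<rho> \<le> r" "\<rho> \<le> 1" using assms(1) unfolding \<rho>_def by auto
  have sig: "norm (of_real \<sigma> :: complex) = 1" "abs \<sigma> = 1" using assms(5) by auto
  have inb: "of_real \<sigma> * s ^ m \<in> ball 0 r" if "s \<in> ball 0 \<rho>" for s :: complex
  proof -
    have ns: "norm s < \<rho>" using that by simp
    have "norm (of_real \<sigma> * s ^ m) = norm s ^ m" by (simp add: norm_mult norm_power sig)
    also have "\<dots> \<le> norm s ^ 1"
      using ns \<rho> assms(4) by (intro power_decreasing) auto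
    finally show ?thesis using ns \<rho> by simp
  qed
  define f where "f s = of_real \<sigma> * p (of_real \<sigma> * s ^ m)" for s :: complex
  have h1: "(\<lambda>s::complex. of_real \<sigma> * s^m) holomorphic_on ball 0 \<rho>" by (intro holomorphic_intros)
  have h2: "(p \<circ> (\<lambda>s::complex. of_real \<sigma> * s^m)) holomorphic_on ball 0 \<rho>"
    by (rule holomorphic_on_compose_gen[OF h1 assms(2)]) (use inb in blast)
  have hf: "f holomorphic_on ball 0 \<rho>" unfolding f_def
    using holomorphic_on_mult[OF holomorphic_on_const h2] by (simp add: o_def)
  have nf: "f s \<noteq> 0" if "s \<in> ball 0 \<rho>" for s :: complex
    using assms(3)[OF inb[OF that]] sig unfolding f_def by auto
  obtain R where R: "R holomorphic_on ball 0 \<rho>" "\<And>z. z \<in> ball 0 \<rho> \<Longrightarrow> R z \<noteq> 0 \<and> R z ^ m = f z"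
    using hol_root[OF hf nf assms(4) \<rho>(1)] by blast
  show ?thesis
  proof (rule that[OF \<rho>(1,2) R(1)])
    fix s :: complex assume s: "s \<in> ball 0 \<rho>"
    have ss: "of_real \<sigma> * of_real \<sigma> = (1::complex)" using assms(5) by auto
    have "F (of_real \<sigma> * s ^ m) - F 0 = (of_real \<sigma> * s ^ m * p (of_real \<sigma> * s ^ m)) ^ a"
      using assms(3)[OF inb[OF s]] by simp
    also have "of_real \<sigma> * s ^ m * p (of_real \<sigma> * s ^ m) = s ^ m * f s"
      unfolding f_def by (simp add: mult_ac)
    also have "\<dots> = (s * R s) ^ m" using R(2)[OF s] by (simp add: power_mult_distrib)
    finally show "R s \<noteq> 0 \<and> F (of_real \<sigma> * s ^ m) - F 0 = (s * R s) ^ (m * a)"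
      using R(2)[OF s] by (simp add: power_mult)
  qed
qed

lemma cont_inj_image:
  fixes f :: "real \<Rightarrow> real"
  assumes xy: "x < y" and c: "continuous_on {x..y} f" and i: "inj_on f {x..y}"
  shows "f ` {x<..<y} = {min (f x) (f y)<..<max (f x) (f y)}"
proof
  show "f ` {x<..<y} \<subseteq> {min (f x) (f y)<..<max (f x) (f y)}"
  proof
    fix w assume "w \<in> f ` {x<..<y}"
    then obtain z where z: "x < z" "z < y" "w = f z" by auto
    from continuous_inj_imp_mono[OF z(1,2) c i] show "w \<in> {min (f x) (f y)<..<max (f x) (f y)}"
      using z(3) by auto
  qed
  show "{min (f x) (f y)<..<max (f x) (f y)} \<subseteq> f ` {x<..<y}"
  proof
    fix w assume w: "w \<in> {min (f x) (f y)<..<max (f x) (f y)}"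
    have "\<exists>z. x \<le> z \<and> z \<le> y \<and> f z = w"
    proof (cases "f x \<le> f y")
      case True
      then show ?thesis using w xy by (intro IVT'[OF _ _ _ c]) auto
    next
      case False
      then show ?thesis using w xy by (intro IVT2'[OF _ _ _ c]) auto
    qed
    then obtain z where z: "x \<le> z" "z \<le> y" "f z = w" by blast
    have "z \<noteq> x" "z \<noteq> y" using z(3) w by auto
    with z show "w \<in> f ` {x<..<y}" by auto
  qed
qed

lemma sign_lemma:
  fixes f :: "real \<Rightarrow> real"
  assumes c: "continuous_on {-d..d} f" and i: "inj_on f {-d..d}" and f0: "f 0 = 0"
    and s0: "0 < s0" "s0 \<le> d" "f s0 > 0"
  shows "\<forall>s\<in>{-d..d}. (0 \<le> f s \<longleftrightarrow> 0 \<le> s)"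
proof
  fix s assume s: "s \<in> {-d..d}"
  have cs: "continuous_on {a..b} f" "inj_on f {a..b}" if "-d \<le> a" "b \<le> d" for a b
    using that by (auto intro: continuous_on_subset[OF c] inj_on_subset[OF i])
  consider "s < 0" | "s = 0" | "0 < s \<and> s < s0" | "s = s0" | "s0 < s" by linarith
  then show "0 \<le> f s \<longleftrightarrow> 0 \<le> s"
  proof cases
    case 1
    have "(f s < f 0 \<and> f 0 < f s0) \<or> (f s0 < f 0 \<and> f 0 < f s)"
      using continuous_inj_imp_mono[OF 1 s0(1)] cs[of s s0] s s0 by auto
    then show ?thesis using 1 f0 s0 by auto
  next
    case 2 then show ?thesis using f0 by simp
  next
    case 3
    have "(f 0 < f s \<and> f s < f s0) \<or> (f s0 < f s \<and> f s < f 0)"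
      using continuous_inj_imp_mono[of 0 s s0 f] 3 cs[of 0 s0] s s0 by auto
    then show ?thesis using 3 f0 s0 by auto
  next
    case 4 then show ?thesis using s0 by simp
  next
    case 5
    have "(f 0 < f s0 \<and> f s0 < f s) \<or> (f s < f s0 \<and> f s0 < f 0)"
      using continuous_inj_imp_mono[of 0 s0 s f] 5 cs[of 0 s] s s0 by auto
    then show ?thesis using 5 f0 s0 by auto
  qed
qed

definition rel :: "(complex \<Rightarrow> complex) \<Rightarrow> (complex \<Rightarrow> complex) \<Rightarrow> nat \<Rightarrow> nat \<Rightarrow> real \<Rightarrow> real \<Rightarrow> real \<Rightarrow> (real \<Rightarrow> real) \<Rightarrow> bool" where
  "rel F G m n \<sigma> \<tau> \<delta> h \<longleftrightarrow> 0 < m \<and> 0 < n \<and> 0 < \<delta> \<and> (\<sigma> = 1 \<or> \<sigma> = -1) \<and> (\<tau> = 1 \<or> \<tau> = -1) \<and>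
     continuous_on {-\<delta>..\<delta>} h \<and> inj_on h {-\<delta>..\<delta>} \<and> h 0 = 0 \<and>
     (\<forall>s\<in>{-\<delta>..\<delta>}. 0 \<le> h s \<longleftrightarrow> 0 \<le> s) \<and>
     (\<forall>s\<in>{-\<delta>..\<delta>}. F (of_real (\<sigma> * s^m)) = G (of_real (\<tau> * (h s)^n)))"

lemma rel_swap:
  assumes "rel F G m n \<sigma> \<tau> \<delta> h"
  shows "\<exists>\<eta> g. rel G F n m \<tau> \<sigma> \<eta> g"
proof -
  have mn: "0 < m" "0 < n" and d: "0 < \<delta>" and st: "\<sigma> = 1 \<or> \<sigma> = -1" "\<tau> = 1 \<or> \<tau> = -1"
    and c: "continuous_on {-\<delta>..\<delta>} h" and i: "inj_on h {-\<delta>..\<delta>}" and h0: "h 0 = 0"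
    and sg: "\<forall>s\<in>{-\<delta>..\<delta>}. 0 \<le> h s \<longleftrightarrow> 0 \<le> s"
    and eq: "\<forall>s\<in>{-\<delta>..\<delta>}. F (of_real (\<sigma> * s^m)) = G (of_real (\<tau> * (h s)^n))"
    using assms unfolding rel_def by auto
  have hnz: "h (-\<delta>) \<noteq> 0" "h \<delta> \<noteq> 0"
    using inj_onD[OF i, of "-\<delta>" 0] inj_onD[OF i, of \<delta> 0] h0 d by auto
  have "0 \<le> h (-\<delta>) \<longleftrightarrow> 0 \<le> -\<delta>" "0 \<le> h \<delta> \<longleftrightarrow> 0 \<le> \<delta>" using sg d by auto
  then have hm: "h (-\<delta>) < 0" "0 < h \<delta>" using hnz d by auto
  define \<eta> where "\<eta> = min (- h (-\<delta>)) (h \<delta>)"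
  have e: "0 < \<eta>" using hm unfolding \<eta>_def by auto
  have sub: "{-\<eta>..\<eta>} \<subseteq> h ` {-\<delta>..\<delta>}"
  proof
    fix t assume t: "t \<in> {-\<eta>..\<eta>}"
    then have "h (-\<delta>) \<le> t" "t \<le> h \<delta>" unfolding \<eta>_def by auto
    from IVT'[OF this _ c] d obtain s where "-\<delta> \<le> s" "s \<le> \<delta>" "h s = t" by auto
    then show "t \<in> h ` {-\<delta>..\<delta>}" by auto
  qed
  define g where "g = the_inv_into {-\<delta>..\<delta>} h"
  have gh: "g (h s) = s" if "s \<in> {-\<delta>..\<delta>}" for s
    unfolding g_def using the_inv_into_f_f[OF i that] .
  have hg: "h (g t) = t" "g t \<in> {-\<delta>..\<delta>}" if "t \<in> {-\<eta>..\<eta>}" for t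
  proof -
    have "t \<in> h ` {-\<delta>..\<delta>}" using sub that by blast
    then show "h (g t) = t" "g t \<in> {-\<delta>..\<delta>}" unfolding g_def
      using f_the_inv_into_f[OF i] the_inv_into_into[OF i, of t "{-\<delta>..\<delta>}"] by auto
  qed
  have cg: "continuous_on {-\<eta>..\<eta>} g"
    using continuous_on_subset[OF continuous_on_inv[OF c compact_Icc] sub] gh by auto
  have ig: "inj_on g {-\<eta>..\<eta>}" by (metis hg(1) inj_onI)
  have g0: "g 0 = 0" using gh[of 0] h0 d by auto
  have sgg: "\<forall>t\<in>{-\<eta>..\<eta>}. 0 \<le> g t \<longleftrightarrow> 0 \<le> t" using sg hg by metis
  have eqg: "\<forall>t\<in>{-\<eta>..\<eta>}. G (of_real (\<tau> * t^n)) = F (of_real (\<sigma> * (g t)^m))"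
    using eq hg by metis
  show ?thesis unfolding rel_def using mn e st cg ig g0 sgg eqg by blast
qed


lemma small_nbhd:
  fixes U V :: "real \<Rightarrow> real"
  assumes "continuous_on {-\<delta>..\<delta>} U" "continuous_on {-\<delta>..\<delta>} V" "U 0 = 0" "V 0 = 0" "0 < \<delta>" "0 < e"
  obtains d where "0 < d" "d \<le> \<delta>" "\<And>s. s \<in> {-d..d} \<Longrightarrow> \<bar>U s\<bar> < e \<and> \<bar>V s\<bar> < e"
proof -
  have z: "0 \<in> {-\<delta>..\<delta>}" using assms(5) by auto
  obtain d1 where d1: "d1 > 0" "\<And>x. x \<in> {-\<delta>..\<delta>} \<Longrightarrow> dist x 0 < d1 \<Longrightarrow> dist (U x) (U 0) < e"
    using assms(1) z assms(6) unfolding continuous_on_iff by meson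
  obtain d2 where d2: "d2 > 0" "\<And>x. x \<in> {-\<delta>..\<delta>} \<Longrightarrow> dist x 0 < d2 \<Longrightarrow> dist (V x) (V 0) < e"
    using assms(2) z assms(6) unfolding continuous_on_iff by meson
  define d where "d = min \<delta> (min d1 d2 / 2)"
  show ?thesis
  proof (rule that[of d])
    show "0 < d" "d \<le> \<delta>" using d1 d2 assms(5) unfolding d_def by auto
    fix s assume s: "s \<in> {-d..d}"
    then have "s \<in> {-\<delta>..\<delta>}" "dist s 0 < d1" "dist s 0 < d2" unfolding d_def dist_real_def using d1(1) d2(1) by auto
    then show "\<bar>U s\<bar> < e \<and> \<bar>V s\<bar> < e" using d1(2) d2(2) assms(3,4) by (auto simp: dist_real_def)
  qed
qed

lemma odd_pow_inj: "odd n \<Longrightarrow> (x::real) ^ n = y ^ n \<Longrightarrow> x = y"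
  by (metis odd_real_root_power_cancel)

lemma rel_basic:
  assumes "rel F G m n \<sigma> \<tau> \<delta> h"
  shows "continuous_on {-\<delta>..\<delta>} (\<lambda>s. \<sigma> * s^m)" "continuous_on {-\<delta>..\<delta>} (\<lambda>s. \<tau> * (h s)^n)"
    "odd n \<Longrightarrow> inj_on (\<lambda>s. \<tau> * (h s)^n) {-\<delta>..\<delta>}"
    "odd m \<Longrightarrow> inj_on (\<lambda>s. \<sigma> * s^m) {-\<delta>..\<delta>}"
proof -
  have st: "\<sigma> = 1 \<or> \<sigma> = -1" "\<tau> = 1 \<or> \<tau> = -1"
    and c: "continuous_on {-\<delta>..\<delta>} h" and i: "inj_on h {-\<delta>..\<delta>}"
    using assms unfolding rel_def by auto
  show "continuous_on {-\<delta>..\<delta>} (\<lambda>s. \<sigma> * s^m)" by (intro continuous_intros)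
  show "continuous_on {-\<delta>..\<delta>} (\<lambda>s. \<tau> * (h s)^n)" by (intro continuous_intros c)
  show "inj_on (\<lambda>s. \<tau> * (h s)^n) {-\<delta>..\<delta>}" if "odd n"
  proof (rule inj_onI)
    fix x y assume xy: "x \<in> {-\<delta>..\<delta>}" "y \<in> {-\<delta>..\<delta>}" "\<tau> * h x ^ n = \<tau> * h y ^ n"
    then have "h x ^ n = h y ^ n" using st by auto
    then have "h x = h y" using odd_pow_inj[OF that] by blast
    then show "x = y" using inj_onD[OF i] xy by blast
  qed
  show "inj_on (\<lambda>s. \<sigma> * s^m) {-\<delta>..\<delta>}" if "odd m"
  proof (rule inj_onI)
    fix x y assume xy: "x \<in> {-\<delta>..\<delta>}" "y \<in> {-\<delta>..\<delta>}" "\<sigma> * x ^ m = \<sigma> * y ^ m"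
    then have "x ^ m = y ^ m" using st by auto
    then show "x = y" using odd_pow_inj[OF that] by blast
  qed
qed

lemma interval_from_image:
  fixes W :: "real \<Rightarrow> real"
  assumes "0 < d" "d \<le> \<delta>" "continuous_on {-\<delta>..\<delta>} W" "inj_on W {-\<delta>..\<delta>}" "W 0 = 0"
    "\<And>s. s \<in> {-d..d} \<Longrightarrow> \<bar>W s\<bar> < e/2"
  obtains a b where "a < 0" "0 < b" "b - a < e" "W ` {-d<..<d} = {a<..<b}"
proof -
  have sub: "{-d..d} \<subseteq> {-\<delta>..\<delta>}" using assms by auto
  have im: "W ` {-d<..<d} = {min (W (-d)) (W d)<..<max (W (-d)) (W d)}"
    using assms(1) by (intro cont_inj_image continuous_on_subset[OF assms(3) sub] inj_on_subset[OF assms(4) sub]) auto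
  have "0 \<in> W ` {-d<..<d}" using assms(1,5) by force
  then have "min (W (-d)) (W d) < 0" "0 < max (W (-d)) (W d)" unfolding im by auto
  moreover have "\<bar>W (-d)\<bar> < e/2" "\<bar>W d\<bar> < e/2" using assms(1,6) by auto
  ultimately show ?thesis using that[OF _ _ _ im] by (auto simp: min_def max_def split: if_splits)
qed

lemma rel_share:
  assumes r: "rel F G m n \<sigma> \<tau> \<delta> h" and "odd m" "odd n"
  shows "share_curve F G"
  unfolding share_curve_def
proof (intro allI impI)
  fix e :: real assume e: "e > 0"
  have mn: "0 < m" "0 < n" and d: "0 < \<delta>" and h0: "h 0 = 0"
    and eq: "\<forall>s\<in>{-\<delta>..\<delta>}. F (of_real (\<sigma> * s^m)) = G (of_real (\<tau> * (h s)^n))"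
    using r unfolding rel_def by auto
  note b = rel_basic[OF r]
  obtain d' where d': "0 < d'" "d' \<le> \<delta>" "\<And>s. s \<in> {-d'..d'} \<Longrightarrow> \<bar>\<sigma> * s^m\<bar> < e/2 \<and> \<bar>\<tau> * (h s)^n\<bar> < e/2"
    using small_nbhd[OF b(1,2) _ _ d, of "e/2"] e h0 mn by auto
  obtain a b' where ab: "a < 0" "0 < b'" "b' - a < e" "(\<lambda>s. \<sigma> * s^m) ` {-d'<..<d'} = {a<..<b'}"
    using interval_from_image[OF d'(1,2) b(1) b(4)[OF assms(2)], of e] d'(3) assms(2) by auto
  obtain c d2 where cd: "c < 0" "0 < d2" "d2 - c < e" "(\<lambda>s. \<tau> * (h s)^n) ` {-d'<..<d'} = {c<..<d2}"
    using interval_from_image[OF d'(1,2) b(2) b(3)[OF assms(3)], of e] d'(3) h0 assms(3) by auto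
  have "curve_img F {a<..<b'} = (\<lambda>s. F (of_real (\<sigma> * s^m))) ` {-d'<..<d'}"
    unfolding curve_img_def ab(4)[symmetric] by (simp add: image_image)
  also have "\<dots> = (\<lambda>s. G (of_real (\<tau> * (h s)^n))) ` {-d'<..<d'}"
    using eq d' by (intro image_cong) auto
  also have "\<dots> = curve_img G {c<..<d2}"
    unfolding curve_img_def cd(4)[symmetric] by (simp add: image_image)
  finally show "\<exists>a b c d. a < 0 \<and> 0 < b \<and> b - a < e \<and> c < 0 \<and> 0 < d \<and> d - c < e \<and>
      curve_img F {a<..<b} = curve_img G {c<..<d}"
    using ab cd by blast
qed

lemma rel_bounce:
  assumes r: "rel F G m n \<sigma> \<tau> \<delta> h" and "even m" "odd n"
  shows "bounces_back G"
  unfolding bounces_back_def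
proof (intro allI impI)
  fix e :: real assume e: "e > 0"
  have mn: "0 < m" "0 < n" and d: "0 < \<delta>" and h0: "h 0 = 0" and st: "\<tau> = 1 \<or> \<tau> = -1"
    and i: "inj_on h {-\<delta>..\<delta>}" and sg: "\<forall>s\<in>{-\<delta>..\<delta>}. 0 \<le> h s \<longleftrightarrow> 0 \<le> s"
    and eq: "\<forall>s\<in>{-\<delta>..\<delta>}. F (of_real (\<sigma> * s^m)) = G (of_real (\<tau> * (h s)^n))"
    using r unfolding rel_def by auto
  note b = rel_basic[OF r]
  define V where "V s = \<tau> * (h s)^n" for s
  obtain d' where d': "0 < d'" "d' \<le> \<delta>" "\<And>s. s \<in> {-d'..d'} \<Longrightarrow> \<bar>\<sigma> * s^m\<bar> < e/2 \<and> \<bar>V s\<bar> < e/2"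
    using small_nbhd[OF b(1,2) _ _ d, of "e/2"] e h0 mn unfolding V_def by auto
  obtain c d2 where cd: "c < 0" "0 < d2" "d2 - c < e" "V ` {-d'<..<d'} = {c<..<d2}"
    using interval_from_image[OF d'(1,2) b(2) b(3)[OF assms(3)], of e] d'(3) h0 assms(3)
    unfolding V_def by auto
  define A where "A = {-d'<..<d'}"
  define Pp where "Pp = A \<inter> {0..}"
  define Pm where "Pm = A \<inter> {..0}"
  have hle: "h s \<le> 0 \<longleftrightarrow> s \<le> 0" if "s \<in> {-\<delta>..\<delta>}" for s
  proof -
    have "h s = 0 \<longleftrightarrow> s = 0" using inj_onD[OF i, of s 0] that h0 d by auto
    moreover have "0 \<le> h s \<longleftrightarrow> 0 \<le> s" using sg that by auto
    ultimately show ?thesis by (smt (verit))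
  qed
  have Vs: "(0 \<le> V s \<longleftrightarrow> (if \<tau> = 1 then 0 \<le> s else s \<le> 0)) \<and> (V s \<le> 0 \<longleftrightarrow> (if \<tau> = 1 then s \<le> 0 else 0 \<le> s))"
    if "s \<in> {-\<delta>..\<delta>}" for s
    using st sg that hle[OF that] zero_le_odd_power[OF assms(3), of "h s"] zero_le_odd_power[OF assms(3), of "- h s"]
    unfolding V_def by (auto simp: assms(3))
  have Asub: "A \<subseteq> {-\<delta>..\<delta>}" unfolding A_def using d' by auto
  have J1: "{c<..<d2} \<inter> {0..} = V ` (if \<tau> = 1 then Pp else Pm)"
    unfolding cd(4)[symmetric] A_def[symmetric] Pp_def Pm_def using Vs Asub by (auto; force)
  have J2: "{c<..<d2} \<inter> {..0} = V ` (if \<tau> = 1 then Pm else Pp)"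
    unfolding cd(4)[symmetric] A_def[symmetric] Pp_def Pm_def using Vs Asub by (auto; force)
  have cg: "curve_img G (V ` P) = (\<lambda>s. F (of_real (\<sigma> * s^m))) ` P" if "P \<subseteq> A" for P
  proof -
    have "curve_img G (V ` P) = (\<lambda>s. G (of_real (V s))) ` P" unfolding curve_img_def by (simp add: image_image)
    also have "\<dots> = (\<lambda>s. F (of_real (\<sigma> * s^m))) ` P" using eq that Asub unfolding V_def by (intro image_cong) auto
    finally show ?thesis .
  qed
  have sym: "(\<lambda>s. F (of_real (\<sigma> * s^m))) ` Pp = (\<lambda>s. F (of_real (\<sigma> * s^m))) ` Pm"
  proof -
    have "Pm = uminus ` Pp" unfolding Pm_def Pp_def A_def by (auto simp: image_iff, rule_tac x="-x" in bexI, auto)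
    then show ?thesis using assms(2) by (simp add: image_image)
  qed
  have "curve_img G ({c<..<d2} \<inter> {0..}) = curve_img G ({c<..<d2} \<inter> {..0})"
    unfolding J1 J2 using cg[of Pp] cg[of Pm] sym unfolding Pp_def Pm_def by auto
  then show "\<exists>a b. a < 0 \<and> 0 < b \<and> b - a < e \<and>
      curve_img G ({a<..<b} \<inter> {0..}) = curve_img G ({a<..<b} \<inter> {..0})"
    using cd by blast
qed


lemma nc_facts:
  fixes F :: "complex \<Rightarrow> complex"
  assumes "analytic_nonconst_near0 F"
  obtains r where "r > 0" "isCont F 0" "\<And>z. z \<noteq> 0 \<Longrightarrow> norm z < r \<Longrightarrow> F z \<noteq> F 0"
proof -
  obtain r a p where f: "r > 0" "a > 0" "p holomorphic_on ball 0 r" "F holomorphic_on ball 0 r"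
    "\<And>z. z \<in> ball 0 r \<Longrightarrow> p z \<noteq> 0 \<and> F z - F 0 = (z * p z) ^ a"
    using factor0[OF assms] by blast
  have "isCont F 0"
    using holomorphic_on_imp_continuous_on[OF f(4)] f(1)
    by (simp add: continuous_on_eq_continuous_at)
  moreover have "F z \<noteq> F 0" if "z \<noteq> 0" "norm z < r" for z
  proof -
    have "z \<in> ball 0 r" using that by simp
    from f(5)[OF this] that show ?thesis by auto
  qed
  ultimately show ?thesis using that f(1) by blast
qed

lemma rough_F0:
  fixes F G :: "complex \<Rightarrow> complex"
  assumes "roughly_agree F G" "isCont F 0" "isCont G 0"
  shows "F 0 = G 0"
proof -
  obtain u v :: "nat \<Rightarrow> real" where uv: "\<forall>k\<ge>1. u k \<noteq> 0 \<and> v k \<noteq> 0" "u \<longlonglongrightarrow> 0" "v \<longlonglongrightarrow> 0"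
    "\<forall>k\<ge>1. F (complex_of_real (u k)) = G (complex_of_real (v k))"
    using assms(1) unfolding roughly_agree_def by blast
  have l1: "(\<lambda>k. F (complex_of_real (u k))) \<longlonglongrightarrow> F 0"
    using isCont_tendsto_compose[OF assms(2), of "\<lambda>k. complex_of_real (u k)"] tendsto_of_real[OF uv(2)] by simp
  have l2: "(\<lambda>k. G (complex_of_real (v k))) \<longlonglongrightarrow> G 0"
    using isCont_tendsto_compose[OF assms(3), of "\<lambda>k. complex_of_real (v k)"] tendsto_of_real[OF uv(3)] by simp
  have "eventually (\<lambda>k. G (complex_of_real (v k)) = F (complex_of_real (u k))) sequentially"
    using uv(4) unfolding eventually_sequentially by (intro exI[of _ 1]) auto
  from tendsto_cong[OF this] l2 have "(\<lambda>k. F (complex_of_real (u k))) \<longlonglongrightarrow> G 0" by simp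
  from LIMSEQ_unique[OF l1 this] show ?thesis .
qed

lemma share_rough:
  fixes F G :: "complex \<Rightarrow> complex"
  assumes "share_curve F G" "analytic_nonconst_near0 F" "analytic_nonconst_near0 G"
  shows "roughly_agree F G"
proof -
  obtain rF where rF: "rF > 0" "isCont F 0" "\<And>z. z \<noteq> 0 \<Longrightarrow> norm z < rF \<Longrightarrow> F z \<noteq> F 0"
    using nc_facts[OF assms(2)] by blast
  obtain rG :: real where rG: "rG > 0" "isCont G 0"
    using nc_facts[OF assms(3)] by blast
  have sc: "\<exists>a b c d. a < 0 \<and> 0 < b \<and> b - a < e \<and> c < 0 \<and> 0 < d \<and> d - c < e \<and>
      curve_img F {a<..<b} = curve_img G {c<..<d}" if "e > 0" for e
    using assms(1) that unfolding share_curve_def by blast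
  have "\<exists>w. norm w < 1 / real (Suc k) \<and> G (of_real w) = F 0" for k
  proof -
    obtain a b c d where abcd: "a < 0" "0 < b" "b - a < 1 / real (Suc k)" "c < 0" "0 < d"
      "d - c < 1 / real (Suc k)" "curve_img F {a<..<b} = curve_img G {c<..<d}"
      using sc[of "1 / real (Suc k)"] by auto
    have "F 0 \<in> curve_img F {a<..<b}" unfolding curve_img_def using abcd by force
    then have "F 0 \<in> curve_img G {c<..<d}" using abcd(7) by simp
    then obtain w where "w \<in> {c<..<d}" "G (of_real w) = F 0" unfolding curve_img_def by auto
    then show ?thesis using abcd by (intro exI[of _ w]) auto
  qed
  then obtain w where w: "\<And>k. norm (w k) < 1 / real (Suc k)" "\<And>k. G (of_real (w k)) = F 0" by metis
  have "(\<lambda>k. G (of_real (w k))) \<longlonglongrightarrow> G 0"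
    using isCont_tendsto_compose[OF rG(2), of "\<lambda>k. complex_of_real (w k)"] tendsto_of_real[OF LIMSEQ_norm_0[OF w(1)]] by simp
  then have F0: "F 0 = G 0" using w(2) LIMSEQ_const_iff by auto
  have "\<exists>x y. x \<noteq> 0 \<and> y \<noteq> 0 \<and> norm x < 1 / real (Suc k) \<and> norm y < 1 / real (Suc k) \<and>
      F (of_real x) = G (of_real y)" for k
  proof -
    define e where "e = min (1 / real (Suc k)) rF"
    have e: "e > 0" unfolding e_def using rF(1) by auto
    obtain a b c d where abcd: "a < 0" "0 < b" "b - a < e" "c < 0" "0 < d"
      "d - c < e" "curve_img F {a<..<b} = curve_img G {c<..<d}"
      using sc[OF e] by auto
    define x where "x = b / 2"
    have x: "x \<noteq> 0" "x \<in> {a<..<b}" "norm x < e" using abcd unfolding x_def by auto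
    then have "F (of_real x) \<in> curve_img F {a<..<b}" unfolding curve_img_def by auto
    then have "F (of_real x) \<in> curve_img G {c<..<d}" using abcd(7) by simp
    then obtain y where y: "y \<in> {c<..<d}" "G (of_real y) = F (of_real x)" unfolding curve_img_def by auto
    have "F (of_real x) \<noteq> F 0" using rF(3)[of "of_real x"] x e_def by auto
    then have "y \<noteq> 0" using y(2) F0 by auto
    moreover have "norm y < e" using y abcd by auto
    ultimately show ?thesis using x y(2) unfolding e_def by (intro exI[of _ x] exI[of _ y]) auto
  qed
  then obtain x y where xy: "\<And>k. x k \<noteq> 0 \<and> y k \<noteq> 0 \<and> norm (x k) < 1 / real (Suc k) \<and>
      norm (y k) < 1 / real (Suc k) \<and> F (of_real (x k)) = G (of_real (y k))" by metis
  have "x \<longlonglongrightarrow> 0" "y \<longlonglongrightarrow> 0" using xy by (auto intro: LIMSEQ_norm_0)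
  then show ?thesis unfolding roughly_agree_def using xy by blast
qed


lemma deriv_zmul:
  assumes "S holomorphic_on ball 0 r" "r > 0"
  shows "deriv (\<lambda>z. z * S z) 0 = S (0::complex)"
proof -
  have "S field_differentiable at 0" using holomorphic_on_imp_differentiable_at[OF assms(1) open_ball] assms(2) by simp
  then have "(S has_field_derivative deriv S 0) (at 0)" by (simp add: field_differentiable_derivI)
  then have "((\<lambda>z. z * S z) has_field_derivative (1 * S 0 + deriv S 0 * 0)) (at 0)"
    by (rule DERIV_mult[OF DERIV_ident])
  then have "((\<lambda>z. z * S z) has_field_derivative S 0) (at 0)" by simp
  then show ?thesis using DERIV_imp_deriv by blast
qed

lemma locinj:
  assumes "R holomorphic_on ball 0 \<rho>" "\<rho> > 0" "R 0 \<noteq> (0::complex)"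
  obtains r where "r > 0" "ball (0::complex) r \<subseteq> ball 0 \<rho>" "inj_on (\<lambda>z. z * R z) (ball 0 r)"
proof -
  have h: "(\<lambda>z. z * R z) holomorphic_on ball 0 \<rho>" by (intro holomorphic_intros assms(1))
  have "deriv (\<lambda>z. z * R z) 0 \<noteq> 0" using deriv_zmul[OF assms(1,2)] assms(3) by simp
  obtain r where "r > 0" "ball (0::complex) r \<subseteq> ball 0 \<rho>" "inj_on (\<lambda>z. z * R z) (ball 0 r)"
    by (rule has_complex_derivative_locally_injective[OF h _ open_ball \<open>deriv (\<lambda>z. z * R z) 0 \<noteq> 0\<close>]) (use assms(2) in simp)
  then show ?thesis by (rule that)
qed

lemma cnj_ball0: "cnj ` ball 0 r = ball 0 r"
proof
  show "cnj ` ball 0 r \<subseteq> ball 0 r" by (auto simp: dist_0_norm)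
  show "ball 0 r \<subseteq> cnj ` ball 0 r"
  proof
    fix z :: complex assume "z \<in> ball 0 r" then show "z \<in> cnj ` ball 0 r" by (intro image_eqI[of _ _ "cnj z"]) auto
  qed
qed



lemma key:
  fixes F G :: "complex \<Rightarrow> complex"
  assumes AF: "analytic_nonconst_near0 F" and AG: "analytic_nonconst_near0 G" and RA: "roughly_agree F G"
  shows "\<exists>m n \<sigma> \<tau> \<delta> h. (odd m \<or> odd n) \<and> rel F G m n \<sigma> \<tau> \<delta> h"
proof -
  obtain rF a p where fF: "rF > 0" "a > 0" "p holomorphic_on ball 0 rF" "F holomorphic_on ball 0 rF"
    "\<And>z. z \<in> ball 0 rF \<Longrightarrow> p z \<noteq> 0 \<and> F z - F 0 = (z * p z) ^ a"
    using factor0[OF AF] by blast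
  obtain rG b q where fG: "rG > 0" "b > 0" "q holomorphic_on ball 0 rG" "G holomorphic_on ball 0 rG"
    "\<And>z. z \<in> ball 0 rG \<Longrightarrow> q z \<noteq> 0 \<and> G z - G 0 = (z * q z) ^ b"
    using factor0[OF AG] by blast
  obtain rF' :: real where cF: "isCont F 0" using nc_facts[OF AF] by blast
  obtain rG' :: real where cG: "isCont G 0" using nc_facts[OF AG] by blast
  have F0: "F 0 = G 0" using rough_F0[OF RA cF cG] .
  obtain u v :: "nat \<Rightarrow> real" where uv: "\<forall>k\<ge>1. u k \<noteq> 0 \<and> v k \<noteq> 0" "u \<longlonglongrightarrow> 0" "v \<longlonglongrightarrow> 0"
    "\<forall>k\<ge>1. F (complex_of_real (u k)) = G (complex_of_real (v k))"
    using RA unfolding roughly_agree_def by blast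
  define dd where "dd = gcd a b"
  define m where "m = b div dd"
  define n where "n = a div dd"
  have an: "a = dd * n" "b = dd * m" unfolding m_def n_def dd_def by simp_all
  have mn: "m > 0" "n > 0" using an fF(2) fG(2) by (auto intro: gr0I)
  have cop: "coprime m n" unfolding m_def n_def dd_def
    using div_gcd_coprime[of a b] fF(2) by (simp add: coprime_commute)
  have oddmn: "odd m \<or> odd n" using cop coprime_common_divisor[of m n 2] by auto
  define L where "L = m * a"
  have L: "L = n * b" "L > 0" unfolding L_def using mn fF(2) by (simp_all add: an mult_ac)
  define K0 where "K0 = {k::nat. k \<ge> 1}"
  have "K0 = {1..}" unfolding K0_def by auto
  then have iK0: "infinite K0" using infinite_Ici[of "1::nat"] by simp
  define sg where "sg k = (sgn (u k), sgn (v k))" for k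
  have sgn3: "sgn (x::real) \<in> {-1,0,1}" for x by (simp add: sgn_if)
  have fin1: "finite (sg ` K0)"
  proof (rule finite_subset[of _ "{-1,0,1} \<times> {-1,0,1}"])
    show "sg ` K0 \<subseteq> {-1,0,1} \<times> {-1,0,1}" unfolding sg_def using sgn3 by blast
  qed simp
  obtain k0 where k0: "k0 \<in> K0" "infinite {k\<in>K0. sg k = sg k0}"
    using pigeonhole_infinite[OF iK0 fin1] by blast
  define K1 where "K1 = {k\<in>K0. sg k = sg k0}"
  define \<sigma> where "\<sigma> = sgn (u k0)"
  define \<tau> where "\<tau> = sgn (v k0)"
  have "u k0 \<noteq> 0" "v k0 \<noteq> 0" using uv(1) k0(1) unfolding K0_def by auto
  then have "sgn (u k0) \<noteq> 0" "sgn (v k0) \<noteq> 0" by (simp_all add: sgn_eq_0_iff)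
  then have st: "\<sigma> = 1 \<or> \<sigma> = -1" "\<tau> = 1 \<or> \<tau> = -1"
    unfolding \<sigma>_def \<tau>_def using sgn3[of "u k0"] sgn3[of "v k0"] by blast+
  have K1p: "k \<ge> 1 \<and> sgn (u k) = \<sigma> \<and> sgn (v k) = \<tau>" if "k \<in> K1" for k
    using that unfolding K1_def K0_def sg_def \<sigma>_def \<tau>_def by auto
  have iK1: "infinite K1" using k0(2) unfolding K1_def .
  obtain \<rho>1 R where al: "\<rho>1 > 0" "\<rho>1 \<le> rF" "R holomorphic_on ball 0 \<rho>1"
    "\<And>s. s \<in> ball 0 \<rho>1 \<Longrightarrow> R s \<noteq> 0 \<and> F (of_real \<sigma> * s ^ m) - F 0 = (s * R s) ^ (m * a)"
    proof - show thesis by (rule alpha[OF fF(1,3) fF(5) mn(1) st(1)]) (assumption, rule that) qed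
  obtain \<rho>2 S where be: "\<rho>2 > 0" "\<rho>2 \<le> rG" "S holomorphic_on ball 0 \<rho>2"
    "\<And>t. t \<in> ball 0 \<rho>2 \<Longrightarrow> S t \<noteq> 0 \<and> G (of_real \<tau> * t ^ n) - G 0 = (t * S t) ^ (n * b)"
    proof - show thesis by (rule alpha[OF fG(1,3) fG(5) mn(2) st(2)]) (assumption, rule that) qed
  define \<alpha> where "\<alpha> = (\<lambda>z. z * R z)"
  define \<beta> where "\<beta> = (\<lambda>z. z * S z)"
  have R0: "R 0 \<noteq> 0" using al(4)[of 0] al(1) by simp
  have S0: "S 0 \<noteq> 0" using be(4)[of 0] be(1) by simp
  have h\<alpha>: "\<alpha> holomorphic_on ball 0 \<rho>1" unfolding \<alpha>_def by (intro holomorphic_intros al(3))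
  have h\<beta>: "\<beta> holomorphic_on ball 0 \<rho>2" unfolding \<beta>_def by (intro holomorphic_intros be(3))
  obtain r2 where r2: "r2 > 0" "ball (0::complex) r2 \<subseteq> ball 0 \<rho>1" "inj_on (\<lambda>z. z * R z) (ball 0 r2)"
    proof - show thesis by (rule locinj[OF al(3) al(1) R0]) (rule that) qed
  obtain r1 where r1: "r1 > 0" "ball (0::complex) r1 \<subseteq> ball 0 \<rho>2" "inj_on (\<lambda>z. z * S z) (ball 0 r1)"
    proof - show thesis by (rule locinj[OF be(3) be(1) S0]) (rule that) qed
  have h\<beta>1: "\<beta> holomorphic_on ball 0 r1" using h\<beta> r1(2) holomorphic_on_subset by blast
  have h\<alpha>2: "\<alpha> holomorphic_on ball 0 r2" using h\<alpha> r2(2) holomorphic_on_subset by blast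
  have i\<beta>: "inj_on \<beta> (ball 0 r1)" using r1(3) unfolding \<beta>_def .
  have i\<alpha>: "inj_on \<alpha> (ball 0 r2)" using r2(3) unfolding \<alpha>_def .
  obtain g where g: "g holomorphic_on \<beta> ` ball 0 r1"
      "\<And>z. z \<in> ball 0 r1 \<Longrightarrow> deriv \<beta> z * deriv g (\<beta> z) = 1" "\<And>z. z \<in> ball 0 r1 \<Longrightarrow> g (\<beta> z) = z"
    proof - show thesis by (rule holomorphic_has_inverse[OF h\<beta>1 open_ball i\<beta>]) (rule that) qed
  define W where "W = \<beta> ` ball 0 r1"
  have oW: "open W" unfolding W_def using open_mapping_thm3[OF h\<beta>1 open_ball i\<beta>] .
  have \<alpha>0: "\<alpha> 0 = 0" and \<beta>0: "\<beta> 0 = 0" unfolding \<alpha>_def \<beta>_def by simp_all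
  have W0: "0 \<in> W" unfolding W_def using r1(1) \<beta>0 by (metis centre_in_ball image_eqI)
  obtain e where e: "e > 0" "ball 0 e \<subseteq> W" using oW W0 open_contains_ball_eq by blast
  define s where "s k = root m \<bar>u k\<bar>" for k
  define t where "t k = root n \<bar>v k\<bar>" for k
  have s_pos: "s k > 0" if "k \<ge> 1" for k using uv(1) that mn by (simp add: s_def real_root_gt_zero)
  have t_pos: "t k > 0" if "k \<ge> 1" for k using uv(1) that mn by (simp add: t_def real_root_gt_zero)
  have s_lim: "s \<longlonglongrightarrow> 0" unfolding s_def using tendsto_real_root[OF tendsto_rabs[OF uv(2)], of m] by simp
  have t_lim: "t \<longlonglongrightarrow> 0" unfolding t_def using tendsto_real_root[OF tendsto_rabs[OF uv(3)], of n] by simp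
  have u_eq: "u k = \<sigma> * s k ^ m" if "k \<in> K1" for k
  proof -
    have "s k ^ m = \<bar>u k\<bar>" unfolding s_def using mn by simp
    moreover have "\<sigma> * \<bar>u k\<bar> = u k" using K1p[OF that] sgn_mult_abs by metis
    ultimately show ?thesis by simp
  qed
  have v_eq: "v k = \<tau> * t k ^ n" if "k \<in> K1" for k
  proof -
    have "t k ^ n = \<bar>v k\<bar>" unfolding t_def using mn by simp
    moreover have "\<tau> * \<bar>v k\<bar> = v k" using K1p[OF that] sgn_mult_abs by metis
    ultimately show ?thesis by simp
  qed
  have ev: "eventually (\<lambda>k. s k < r2 \<and> t k < r1) sequentially"
    by (intro eventually_conj order_tendstoD(2)[OF s_lim] order_tendstoD(2)[OF t_lim] r2(1) r1(1))
  obtain N where N: "\<And>k. k \<ge> N \<Longrightarrow> s k < r2 \<and> t k < r1" using ev unfolding eventually_sequentially by blast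
  define K2 where "K2 = K1 \<inter> {N..}"
  have iK2: "infinite K2"
  proof -
    have "K2 = K1 - {..<N}" unfolding K2_def by auto
    then show ?thesis using Diff_infinite_finite[OF _ iK1, of "{..<N}"] by simp
  qed
  have K2p: "(of_real (s k) :: complex) \<in> ball 0 r2 \<and> (of_real (t k) :: complex) \<in> ball 0 r1 \<and> k \<in> K1" if "k \<in> K2" for k
  proof -
    have "k \<in> K1" "k \<ge> N" using that unfolding K2_def by auto
    moreover have "k \<ge> 1" using K1p[OF \<open>k \<in> K1\<close>] by simp
    ultimately show ?thesis using N[of k] s_pos[of k] t_pos[of k] by (simp add: dist_norm)
  qed
  have Fk: "F (of_real (u k)) - F 0 = \<alpha> (of_real (s k)) ^ L" if "k \<in> K2" for k
  proof -
    have "(of_real (s k) :: complex) \<in> ball 0 \<rho>1" using K2p[OF that] r2(2) by blast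
    from al(4)[OF this] have "F (of_real \<sigma> * (of_real (s k)) ^ m) - F 0 = \<alpha> (of_real (s k)) ^ L"
      unfolding \<alpha>_def L_def by simp
    moreover have "of_real (u k) = (of_real \<sigma> * (of_real (s k)) ^ m :: complex)"
      using u_eq[of k] K2p[OF that] by simp
    ultimately show ?thesis by simp
  qed
  have Gk: "G (of_real (v k)) - G 0 = \<beta> (of_real (t k)) ^ L" if "k \<in> K2" for k
  proof -
    have "(of_real (t k) :: complex) \<in> ball 0 \<rho>2" using K2p[OF that] r1(2) by blast
    from be(4)[OF this] have "G (of_real \<tau> * (of_real (t k)) ^ n) - G 0 = \<beta> (of_real (t k)) ^ L"
      unfolding \<beta>_def L(1) by simp
    moreover have "of_real (v k) = (of_real \<tau> * (of_real (t k)) ^ n :: complex)"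
      using v_eq[of k] K2p[OF that] by simp
    ultimately show ?thesis by simp
  qed
  have \<alpha>nz: "\<alpha> (of_real (s k)) \<noteq> 0" if "k \<in> K2" for k
  proof -
    have "(of_real (s k) :: complex) \<in> ball 0 \<rho>1" using K2p[OF that] r2(2) by blast
    then have "R (of_real (s k)) \<noteq> 0" using al(4) by blast
    moreover have "s k \<noteq> 0" using s_pos K1p K2p[OF that] by fastforce
    ultimately show ?thesis unfolding \<alpha>_def by simp
  qed
  have eqk: "\<alpha> (of_real (s k)) ^ L = \<beta> (of_real (t k)) ^ L" if "k \<in> K2" for k
    using Fk[OF that] Gk[OF that] uv(4) K1p K2p[OF that] F0 by auto
  have \<beta>nz: "\<beta> (of_real (t k)) \<noteq> 0" if "k \<in> K2" for k
    using eqk[OF that] \<alpha>nz[OF that] L(2) by (metis power_eq_0_iff)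
  define \<omega>f where "\<omega>f k = \<alpha> (of_real (s k)) / \<beta> (of_real (t k))" for k
  have \<omega>L: "\<omega>f k ^ L = 1" if "k \<in> K2" for k
    unfolding \<omega>f_def power_divide using eqk[OF that] \<beta>nz[OF that] by simp
  have fin2: "finite (\<omega>f ` K2)"
    by (rule finite_subset[of _ "{z. z ^ L = 1}"]) (use \<omega>L L(2) in \<open>auto intro: finite_roots_unity\<close>)
  obtain k1 where k1: "k1 \<in> K2" "infinite {k\<in>K2. \<omega>f k = \<omega>f k1}"
    using pigeonhole_infinite[OF iK2 fin2] by blast
  define K3 where "K3 = {k\<in>K2. \<omega>f k = \<omega>f k1}"
  define \<omega> where "\<omega> = \<omega>f k1"
  have iK3: "infinite K3" using k1(2) unfolding K3_def .
  have \<omega>1: "\<omega> ^ L = 1" unfolding \<omega>_def using \<omega>L[OF k1(1)] .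
  have \<omega>nz: "\<omega> \<noteq> 0" using \<omega>1 L(2) by (metis power_0_left zero_neq_one gr_implies_not0)
  have \<alpha>eq: "\<alpha> (of_real (s k)) = \<omega> * \<beta> (of_real (t k))" if "k \<in> K3" for k
  proof -
    have "k \<in> K2" "\<omega>f k = \<omega>" using that unfolding K3_def \<omega>_def by auto
    then show ?thesis using \<beta>nz unfolding \<omega>f_def by (auto simp: field_simps)
  qed
  have contA: "continuous_on (ball 0 r2) (\<lambda>z. \<alpha> z / \<omega>)"
    by (intro continuous_intros holomorphic_on_imp_continuous_on[OF h\<alpha>2]) (use \<omega>nz in auto)
  have "0 \<in> ball (0::complex) r2" using r2(1) by simp
  from contA[unfolded continuous_on_iff, rule_format, OF this e(1)]
  obtain d where d: "d > 0" "\<And>z. z \<in> ball 0 r2 \<Longrightarrow> dist z 0 < d \<Longrightarrow> dist (\<alpha> z / \<omega>) (\<alpha> 0 / \<omega>) < e"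
    by blast
  define \<rho>3 where "\<rho>3 = min r2 d"
  have \<rho>3: "\<rho>3 > 0" "ball (0::complex) \<rho>3 \<subseteq> ball 0 r2" unfolding \<rho>3_def using r2(1) d(1) by auto
  have inW: "\<alpha> z / \<omega> \<in> W" if "z \<in> ball 0 \<rho>3" for z
  proof -
    have "z \<in> ball 0 r2" "dist z 0 < d" using that \<rho>3(2) unfolding \<rho>3_def by (auto simp: dist_commute)
    from d(2)[OF this] have "\<alpha> z / \<omega> \<in> ball 0 e" using \<alpha>0 by (simp add: dist_commute)
    then show ?thesis using e(2) by blast
  qed
  define h where "h z = g (\<alpha> z / \<omega>)" for z
  have hh: "h holomorphic_on ball 0 \<rho>3"
  proof -
    have "(\<lambda>z. \<alpha> z / \<omega>) holomorphic_on ball 0 \<rho>3"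
      using holomorphic_on_subset[OF h\<alpha>2 \<rho>3(2)] \<omega>nz by (intro holomorphic_intros) auto
    from holomorphic_on_compose_gen[OF this g(1)[folded W_def]] inW
    show ?thesis unfolding h_def o_def by blast
  qed
  have hprop: "\<beta> (h z) = \<alpha> z / \<omega> \<and> h z \<in> ball 0 r1" if zin: "z \<in> ball 0 \<rho>3" for z
  proof -
    obtain w where w: "w \<in> ball 0 r1" "\<alpha> z / \<omega> = \<beta> w" using inW[OF zin] unfolding W_def by blast
    then have "h z = w" unfolding h_def using g(3) by simp
    then show ?thesis using w by simp
  qed
  have ih: "inj_on h (ball 0 \<rho>3)"
  proof (rule inj_onI)
    fix x y assume xy: "x \<in> ball 0 \<rho>3" "y \<in> ball 0 \<rho>3" "h x = h y"
    then have "\<alpha> x / \<omega> = \<alpha> y / \<omega>" using hprop[OF xy(1)] hprop[OF xy(2)] by metis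
    then have "\<alpha> x = \<alpha> y" using \<omega>nz by simp
    then show "x = y" using inj_onD[OF i\<alpha>] xy(1,2) \<rho>3(2) by blast
  qed
  have h0: "h 0 = 0" unfolding h_def using \<alpha>0 g(3)[of 0] \<beta>0 r1(1) by simp
  have hs: "h (of_real (s k)) = of_real (t k)" if "k \<in> K3" "s k < \<rho>3" for k
  proof -
    have k2: "k \<in> K2" using that unfolding K3_def by auto
    have "\<alpha> (of_real (s k)) / \<omega> = \<beta> (of_real (t k))" using \<alpha>eq[OF that(1)] \<omega>nz by simp
    then show ?thesis unfolding h_def using g(3) K2p[OF k2] by simp
  qed
  (* h is real on the real axis *)
  define H where "H z = h z - cnj (h (cnj z))" for z
  have hH: "H holomorphic_on ball 0 \<rho>3"
  proof -
    have "(cnj \<circ> h \<circ> cnj) holomorphic_on ball 0 \<rho>3"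
      by (rule holomorphic_on_compose_cnj_cnj) (use hh in \<open>simp_all add: cnj_ball0\<close>)
    then show ?thesis unfolding H_def using hh by (intro holomorphic_intros) (auto simp: o_def)
  qed
  define Z where "Z = (\<lambda>k. complex_of_real (s k)) ` {k\<in>K3. s k < \<rho>3}"
  have ev2: "\<exists>k\<in>K3. s k < x" if xpos: "x > 0" for x
  proof -
    obtain N2 where "\<And>k. k \<ge> N2 \<Longrightarrow> s k < x"
      using order_tendstoD(2)[OF s_lim xpos] unfolding eventually_sequentially by blast
    moreover obtain k where "k \<ge> N2" "k \<in> K3" using iK3 unfolding infinite_nat_iff_unbounded_le by blast
    ultimately show ?thesis by blast
  qed
  have K3s: "s k > 0" if "k \<in> K3" for k
  proof -
    have "k \<in> K2" using that unfolding K3_def by auto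
    then show ?thesis using K2p K1p s_pos by blast
  qed
  have K3t: "t k > 0" if "k \<in> K3" for k
  proof -
    have "k \<in> K2" using that unfolding K3_def by auto
    then show ?thesis using K2p K1p t_pos by blast
  qed
  have lim: "0 islimpt Z"
    unfolding islimpt_approachable
  proof (intro allI impI)
    fix x :: real assume x: "x > 0"
    obtain k where k: "k \<in> K3" "s k < min x \<rho>3" using ev2[of "min x \<rho>3"] x \<rho>3(1) by auto
    show "\<exists>x'\<in>Z. x' \<noteq> 0 \<and> dist x' 0 < x"
      using k K3s[OF k(1)] unfolding Z_def by (intro bexI[of _ "of_real (s k)"]) auto
  qed
  have HZ: "H z = 0" if zZ: "z \<in> Z" for z
  proof -
    obtain k where k: "k \<in> K3" "s k < \<rho>3" "z = of_real (s k)" using zZ unfolding Z_def by blast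
    show ?thesis unfolding H_def k(3) using hs[OF k(1,2)] by simp
  qed
  have Zsub: "Z \<subseteq> ball 0 \<rho>3" unfolding Z_def using K3s by (auto simp: abs_of_pos)
  have Hz: "H z = 0" if "z \<in> ball 0 \<rho>3" for z
    by (rule analytic_continuation[OF hH open_ball connected_ball Zsub _ lim HZ that]) (use \<rho>3(1) in simp)
  define hr where "hr x = Re (h (of_real x))" for x
  have hr_eq: "h (of_real x) = of_real (hr x)" if "\<bar>x\<bar> < \<rho>3" for x
  proof -
    have "H (of_real x) = 0" using Hz that by simp
    then have "h (of_real x) = cnj (h (of_real x))" unfolding H_def by simp
    then have "Im (h (of_real x)) = 0" by (metis cnj.sel(2) complex.expand neg_equal_zero) 
    then show ?thesis unfolding hr_def by (simp add: complex_eq_iff)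
  qed
  define \<delta> where "\<delta> = \<rho>3 / 2"
  have \<delta>: "\<delta> > 0" "\<delta> < \<rho>3" unfolding \<delta>_def using \<rho>3(1) by auto
  have Iin: "\<bar>x\<bar> < \<rho>3" if "x \<in> {-\<delta>..\<delta>}" for x using that \<delta> by auto
  have chr: "continuous_on {-\<delta>..\<delta>} hr"
  proof -
    have "continuous_on (ball 0 \<rho>3) h" using hh holomorphic_on_imp_continuous_on by blast
    moreover have "continuous_on {-\<delta>..\<delta>} (\<lambda>x. complex_of_real x)" by (intro continuous_intros)
    moreover have "(\<lambda>x. complex_of_real x) ` {-\<delta>..\<delta>} \<subseteq> ball 0 \<rho>3" using Iin by auto
    ultimately have "continuous_on {-\<delta>..\<delta>} (\<lambda>x. h (complex_of_real x))"
      by (rule continuous_on_compose2)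
    then show ?thesis unfolding hr_def by (intro continuous_intros)
  qed
  have ihr: "inj_on hr {-\<delta>..\<delta>}"
  proof (rule inj_onI)
    fix x y assume xy: "x \<in> {-\<delta>..\<delta>}" "y \<in> {-\<delta>..\<delta>}" "hr x = hr y"
    then have "h (of_real x) = h (of_real y)" using hr_eq Iin by metis
    moreover have "(of_real x :: complex) \<in> ball 0 \<rho>3" "(of_real y :: complex) \<in> ball 0 \<rho>3" using Iin xy by auto
    ultimately have "(of_real x :: complex) = of_real y" using inj_onD[OF ih] by blast
    then show "x = y" by simp
  qed
  have hr0: "hr 0 = 0" unfolding hr_def using h0 by simp
  obtain k where k: "k \<in> K3" "s k < \<delta>" using ev2[OF \<delta>(1)] by blast
  have "hr (s k) = t k" unfolding hr_def using hs[OF k(1)] k(2) \<delta>(2) by simp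
  then have hrs: "hr (s k) > 0" using K3t[OF k(1)] by simp
  have sgn_hr: "\<forall>x\<in>{-\<delta>..\<delta>}. (0 \<le> hr x \<longleftrightarrow> 0 \<le> x)"
    by (rule sign_lemma[OF chr ihr hr0 K3s[OF k(1)] _ hrs]) (use k(2) in simp)
  have releq: "F (of_real (\<sigma> * x^m)) = G (of_real (\<tau> * (hr x)^n))" if "x \<in> {-\<delta>..\<delta>}" for x
  proof -
    have xb: "(of_real x :: complex) \<in> ball 0 \<rho>3" using Iin[OF that] by simp
    then have xb1: "(of_real x :: complex) \<in> ball 0 \<rho>1" using \<rho>3(2) r2(2) by blast
    have "F (of_real (\<sigma> * x^m)) - F 0 = \<alpha> (of_real x) ^ L"
      using al(4)[OF xb1] unfolding \<alpha>_def L_def by simp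
    also have "\<alpha> (of_real x) = \<omega> * \<beta> (h (of_real x))" using hprop[OF xb] \<omega>nz by simp
    also have "(\<omega> * \<beta> (h (of_real x))) ^ L = \<beta> (h (of_real x)) ^ L" using \<omega>1 by (simp add: power_mult_distrib)
    also have "\<beta> (h (of_real x)) ^ L = G (of_real (\<tau> * (hr x)^n)) - G 0"
    proof -
      have hb0: "of_real (hr x) \<in> ball (0::complex) r1" using hprop[OF xb] hr_eq[OF Iin[OF that]] by metis
      have hb: "of_real (hr x) \<in> ball (0::complex) \<rho>2" using hb0 r1(2) by blast
      show ?thesis using be(4)[OF hb] hr_eq[OF Iin[OF that]] unfolding \<beta>_def L(1) by simp
    qed
    finally show ?thesis using F0 by simp
  qed
  have "rel F G m n \<sigma> \<tau> \<delta> hr"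
    unfolding rel_def using mn \<delta>(1) st chr ihr hr0 sgn_hr releq by blast
  then show ?thesis using oddmn by blast
qed


theorem proposition4:
  fixes F G :: "complex \<Rightarrow> complex"
  assumes "analytic_nonconst_near0 F" and "analytic_nonconst_near0 G"
    and "\<not> bounces_back F" and "\<not> bounces_back G"
  shows "roughly_agree F G \<longleftrightarrow> share_curve F G"
proof
  assume ra: "roughly_agree F G"
  obtain m n \<sigma> \<tau> \<delta> h where o: "odd m \<or> odd n" and r: "rel F G m n \<sigma> \<tau> \<delta> h"
    using key[OF assms(1,2) ra] by blast
  show "share_curve F G"
  proof (cases "odd m \<and> odd n")
    case True
    then show ?thesis using rel_share[OF r] by blast
  next
    case False
    show ?thesis
    proof (cases "even m")
      case True
      with o have "odd n" by blast
      from rel_bounce[OF r True this] assms(4) show ?thesis by blast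
    next
      case em: False
      with False have en: "even n" by blast
      obtain \<eta> g where r2: "rel G F n m \<tau> \<sigma> \<eta> g" using rel_swap[OF r] by blast
      from rel_bounce[OF r2 en] em assms(3) show ?thesis by blast
    qed
  qed
next
  assume "share_curve F G"
  then show "roughly_agree F G" using share_rough assms(1,2) by blast
qed


end
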